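(* Let $U$ be a VLA-J-SS. Then $U$ satisfies the half Jacobi identity if and only if it satisfies the half associator formula: for all homogeneous $u,v,w\in U$ and all $k,n\in\mathbb{N}$, $$(u_kv)_nw=\sum_{i\ge0}(-1)^i\binom{k}{i}\big(u_{k-i}(v_{n+i}w)-\varepsilon_{u,v}(-1)^kv_{n+k-i}(u_iw)\big).$$
   Context: All spaces over $\mathbb{C}$; $\mathbb{N}=\{0,1,2,\dots\}$; $\varepsilon_{u,v}=(-1)^{|u||v|}$. A VLA-J-SS is a $\mathbb{Z}_2$-graded space $U$ with an even linear operator $D$ and bilinear products $u_nv$ ($n\in\mathbb{N}$) such that for homogeneous $u,v$: $u_nv=0$ for $n$ large; $(Du)_nv=-nu_{n-1}v$ (read as $0$ for $n=0$); $D(u_nv)=(Du)_nv+u_n(Dv)$; $|u_nv|=|u|+|v|$. The half Jacobi identity is: for all homogeneous $u,v,w\in U$ and all $k,m,n\in\mathbb{N}$, $\sum_{i\ge0}(-1)^i\binom{k}{i}(u_{m+k-i}(v_{n+i}w)-\varepsilon_{u,v}(-1)^kv_{n+k-i}(u_{m+i}w))=\sum_{i\ge0}\binom{m}{i}(u_{k+i}v)_{m+n-i}w$. *)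

theory Defs
  imports Complex_Main
begin

text \<open>A Z2-graded complex vector space is modelled by a carrier type 'a with a
 complex scalar multiplication sc making it a vector space, together with the
 two homogeneous components G False (even) and G True (odd).
 prd n u v stands for the n-th product u_n v.\<close>

definition eps :: "bool \<Rightarrow> bool \<Rightarrow> complex" where
  "eps p q = (if p \<and> q then -1 else 1)"

definition VLA_J_SS ::
  "(complex \<Rightarrow> 'a::ab_group_add \<Rightarrow> 'a) \<Rightarrow> (bool \<Rightarrow> 'a set) \<Rightarrow> ('a \<Rightarrow> 'a)
    \<Rightarrow> (nat \<Rightarrow> 'a \<Rightarrow> 'a \<Rightarrow> 'a) \<Rightarrow> bool" where
  "VLA_J_SS sc G D prd \<longleftrightarrow>
     vector_space sc
   \<and> (\<forall>p. module.subspace sc (G p))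
   \<and> (\<forall>x. \<exists>!ab. fst ab \<in> G False \<and> snd ab \<in> G True \<and> x = fst ab + snd ab)
   \<and> Vector_Spaces.linear sc sc D
   \<and> (\<forall>p. D ` G p \<subseteq> G p)
   \<and> (\<forall>n v. Vector_Spaces.linear sc sc (\<lambda>u. prd n u v))
   \<and> (\<forall>n u. Vector_Spaces.linear sc sc (\<lambda>v. prd n u v))
   \<and> (\<forall>p q u v. u \<in> G p \<longrightarrow> v \<in> G q \<longrightarrow>
        (\<exists>N. \<forall>n\<ge>N. prd n u v = 0)
      \<and> prd 0 (D u) v = 0
      \<and> (\<forall>n. prd (Suc n) (D u) v = sc (- of_nat (Suc n)) (prd n u v))
      \<and> (\<forall>n. D (prd n u v) = prd n (D u) v + prd n u (D v))
      \<and> (\<forall>n. prd n u v \<in> G (p \<noteq> q)))"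

definition half_jacobi ::
  "(complex \<Rightarrow> 'a::ab_group_add \<Rightarrow> 'a) \<Rightarrow> (bool \<Rightarrow> 'a set)
    \<Rightarrow> (nat \<Rightarrow> 'a \<Rightarrow> 'a \<Rightarrow> 'a) \<Rightarrow> bool" where
  "half_jacobi sc G prd \<longleftrightarrow>
    (\<forall>p q r u v w k m n. u \<in> G p \<longrightarrow> v \<in> G q \<longrightarrow> w \<in> G r \<longrightarrow>
       (\<Sum>i\<le>k. sc ((-1)^i * of_nat (k choose i))
          (prd (m + k - i) u (prd (n + i) v w)
           - sc (eps p q * (-1)^k) (prd (n + k - i) v (prd (m + i) u w))))
     = (\<Sum>i\<le>m. sc (of_nat (m choose i)) (prd (m + n - i) (prd (k + i) u v) w)))"

definition half_associator ::
  "(complex \<Rightarrow> 'a::ab_group_add \<Rightarrow> 'a) \<Rightarrow> (bool \<Rightarrow> 'a set)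
    \<Rightarrow> (nat \<Rightarrow> 'a \<Rightarrow> 'a \<Rightarrow> 'a) \<Rightarrow> bool" where
  "half_associator sc G prd \<longleftrightarrow>
    (\<forall>p q r u v w k n. u \<in> G p \<longrightarrow> v \<in> G q \<longrightarrow> w \<in> G r \<longrightarrow>
       prd n (prd k u v) w
     = (\<Sum>i\<le>k. sc ((-1)^i * of_nat (k choose i))
          (prd (k - i) u (prd (n + i) v w)
           - sc (eps p q * (-1)^k) (prd (n + k - i) v (prd i u w)))))"

end

theory Submission
  imports Defs
begin

context module
begin

lemma pascal_sum:
  "(\<Sum>i\<le>Suc k. of_nat (Suc k choose i) *s x i)
   = (\<Sum>i\<le>k. of_nat (k choose i) *s x i) + (\<Sum>i\<le>k. of_nat (k choose i) *s x (Suc i))"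
proof -
  have 1: "(\<Sum>i\<le>Suc k. of_nat (Suc k choose i) *s x i)
      = x 0 + (\<Sum>i\<le>k. of_nat (Suc k choose Suc i) *s x (Suc i))"
    by (subst sum.atMost_Suc_shift) simp
  also have "\<dots> = x 0 + (\<Sum>i\<le>k. of_nat (k choose i) *s x (Suc i))
        + (\<Sum>i\<le>k. of_nat (k choose Suc i) *s x (Suc i))"
    by (simp add: scale_left_distrib sum.distrib add.assoc)
  finally have A: "(\<Sum>i\<le>Suc k. of_nat (Suc k choose i) *s x i) = x 0 + (\<Sum>i\<le>k. of_nat (k choose i) *s x (Suc i))
        + (\<Sum>i\<le>k. of_nat (k choose Suc i) *s x (Suc i))" .
  have "(\<Sum>i\<le>k. of_nat (k choose i) *s x i) = (\<Sum>i\<le>Suc k. of_nat (k choose i) *s x i)"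
    by (simp add: binomial_eq_0)
  also have "\<dots> = x 0 + (\<Sum>i\<le>k. of_nat (k choose Suc i) *s x (Suc i))"
    by (subst sum.atMost_Suc_shift) simp
  finally show ?thesis using A by (simp add: algebra_simps)
qed

lemma recP:
  "(\<Sum>i\<le>Suc k. of_nat (Suc k choose i) *s ((-1)^i *s f (m + Suc k - i) (n + i)))
   + (\<Sum>i\<le>k. of_nat (k choose i) *s ((-1)^i *s f (m + k - i) (Suc n + i)))
   = (\<Sum>i\<le>k. of_nat (k choose i) *s ((-1)^i *s f (Suc m + k - i) (n + i)))"
proof -
  have e: "(\<Sum>i\<le>k. of_nat (k choose i) *s ((-1)^(Suc i) *s f (m + Suc k - Suc i) (n + Suc i)))
     = - (\<Sum>i\<le>k. of_nat (k choose i) *s ((-1)^i *s f (m + k - i) (Suc n + i)))"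
    by (simp add: sum_negf[symmetric])
  show ?thesis
    by (subst pascal_sum) (simp only: e, simp)
qed

lemma recQ:
  "(\<Sum>i\<le>k. of_nat (k choose i) *s ((-1)^i *s g (Suc n + k - i) (m + i)))
   - (\<Sum>i\<le>Suc k. of_nat (Suc k choose i) *s ((-1)^i *s g (n + Suc k - i) (m + i)))
   = (\<Sum>i\<le>k. of_nat (k choose i) *s ((-1)^i *s g (n + k - i) (Suc m + i)))"
proof -
  have e: "(\<Sum>i\<le>k. of_nat (k choose i) *s ((-1)^(Suc i) *s g (n + Suc k - Suc i) (m + Suc i)))
     = - (\<Sum>i\<le>k. of_nat (k choose i) *s ((-1)^i *s g (n + k - i) (Suc m + i)))"
    by (simp add: sum_negf[symmetric])
  show ?thesis
    by (subst pascal_sum) (simp only: e, simp)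
qed

lemma recR:
  "(\<Sum>i\<le>Suc m. of_nat (Suc m choose i) *s h (k + i) (Suc m + n - i))
   = (\<Sum>i\<le>m. of_nat (m choose i) *s h (Suc k + i) (m + n - i))
   + (\<Sum>i\<le>m. of_nat (m choose i) *s h (k + i) (m + Suc n - i))"
  by (subst pascal_sum) (simp add: add.commute)

end


theorem lemma6p2:
  fixes sc :: "complex \<Rightarrow> 'a::ab_group_add \<Rightarrow> 'a"
    and G :: "bool \<Rightarrow> 'a set" and D :: "'a \<Rightarrow> 'a"
    and prd :: "nat \<Rightarrow> 'a \<Rightarrow> 'a \<Rightarrow> 'a"
  assumes "VLA_J_SS sc G D prd"
  shows "half_jacobi sc G prd \<longleftrightarrow> half_associator sc G prd"
proof -
  from assms have "vector_space sc" unfolding VLA_J_SS_def by blast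
  then interpret vector_space sc .
  show ?thesis
  proof
    assume H: "half_jacobi sc G prd"
    show "half_associator sc G prd"
      unfolding half_associator_def
    proof (intro allI impI)
      fix p q r u v w k n
      assume "u \<in> G p" "v \<in> G q" "w \<in> G r"
      from H[unfolded half_jacobi_def, rule_format, OF this, of k 0 n] show
        "prd n (prd k u v) w = (\<Sum>i\<le>k. sc ((-1)^i * of_nat (k choose i))
          (prd (k - i) u (prd (n + i) v w)
           - sc (eps p q * (-1)^k) (prd (n + k - i) v (prd i u w))))"
        by simp
    qed
  next
    assume H: "half_associator sc G prd"
    show "half_jacobi sc G prd"
      unfolding half_jacobi_def
    proof (intro allI impI)
      fix p q r u v w k m n
      assume uvw: "u \<in> G p" "v \<in> G q" "w \<in> G r"
      define e where "e = eps p q"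
      define L where "L = (\<lambda>k m n. (\<Sum>i\<le>k. sc ((-1)^i * of_nat (k choose i))
          (prd (m + k - i) u (prd (n + i) v w)
           - sc (e * (-1)^k) (prd (n + k - i) v (prd (m + i) u w)))))"
      define R where "R = (\<lambda>k m n. (\<Sum>i\<le>m. sc (of_nat (m choose i)) (prd (m + n - i) (prd (k + i) u v) w)))"
      define f where "f = (\<lambda>a b. prd a u (prd b v w))"
      define g where "g = (\<lambda>a b. prd a v (prd b u w))"
      define h where "h = (\<lambda>a b. prd b (prd a u v) w)"
      define P where "P = (\<lambda>k m n. (\<Sum>i\<le>k. sc (of_nat (k choose i)) (sc ((-1)^i) (f (m + k - i) (n + i)))))"
      define Q where "Q = (\<lambda>k m n. (\<Sum>i\<le>k. sc (of_nat (k choose i)) (sc ((-1)^i) (g (n + k - i) (m + i)))))"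
      have LPQ: "L k m n = P k m n - sc (e * (-1)^k) (Q k m n)" for k m n
        unfolding L_def P_def Q_def f_def g_def
        by (simp add: scale_right_diff_distrib scale_sum_right sum_subtractf mult.commute mult.left_commute)
      have RR: "R k (Suc m) n = R (Suc k) m n + R k m (Suc n)" for k m n
        using recR[of m h k n] unfolding R_def h_def by simp
      have PP: "P k (Suc m) n = P (Suc k) m n + P k m (Suc n)" for k m n
        using recP[of k f m n] unfolding P_def by simp
      have QQ: "Q k (Suc m) n = Q k m (Suc n) - Q (Suc k) m n" for k m n
        using recQ[of k g n m] unfolding Q_def by simp
      have LL: "L k (Suc m) n = L (Suc k) m n + L k m (Suc n)" for k m n
        unfolding LPQ PP QQ by (simp add: scale_right_diff_distrib algebra_simps)
      have "\<forall>k n. L k m n = R k m n"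
      proof (induction m)
        case 0
        show ?case
        proof (intro allI)
          fix k n
          show "L k 0 n = R k 0 n"
            using H[unfolded half_associator_def, rule_format, OF uvw, of n k]
            unfolding L_def R_def e_def by simp
        qed
      next
        case (Suc m)
        then show ?case using LL RR by simp
      qed
      then show "(\<Sum>i\<le>k. sc ((-1)^i * of_nat (k choose i))
          (prd (m + k - i) u (prd (n + i) v w)
           - sc (eps p q * (-1)^k) (prd (n + k - i) v (prd (m + i) u w))))
     = (\<Sum>i\<le>m. sc (of_nat (m choose i)) (prd (m + n - i) (prd (k + i) u v) w))"
        unfolding L_def R_def e_def by simp
    qed
  qed
qed

end
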